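(* Let $q=p^n$ with $p$ prime, let $d+1$ be a divisor of $q-1$, and let $f:\mathbb{F}_q\to\mathbb{F}_q$ be a $(d+1)$-divisible Dembowski–Ostrom polynomial which is almost-$(d+1)$-to-1. Then: (a) $f$ is zero-difference $d$-balanced; (b) $f$ is differentially $d$-uniform and all its differential sets $D_a(f)=\{f(x+a)-f(x):x\in\mathbb{F}_q\}$, $a\neq 0$, are $\mathbb{F}_p$-linear subspaces of $\mathbb{F}_q$; (c) $d=p^i$ for some integer $i\geq 0$.
   Context: A polynomial $f\in\mathbb{F}_q[x]$, $q=p^n$, is Dembowski–Ostrom (DO) if it can be written as $\sum_{i,j=0}^{n-1}a_{ij}x^{p^i+p^j}$ when $q$ is odd, and as $\sum_{i\neq j}a_{ij}x^{2^i+2^j}$ when $q$ is even. For a divisor $k$ of $q-1$, $f$ is $k$-divisible if $f(x)=f'(x^k)$ for some map $f'$ (equivalently $f(x)=f(\omega x)$ for all $x$ and all $\omega$ with $\omega^k=1$). $f$ is almost-$k$-to-1 if there is a unique element of $\mathrm{Im}(f)$ with exactly one preimage and every other element of $\mathrm{Im}(f)$ has exactly $k$ preimages. $f$ is differentially $d$-uniform if $d=\max_{a\neq 0,\,b}|\{x: f(x+a)-f(x)=b\}|$. $f$ is zero-difference $d$-balanced if for every nonzero $a$ the equation $f(x+a)-f(x)=0$ has exactly $d$ solutions. *)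

theory Defs
  imports "HOL-Computational_Algebra.Computational_Algebra"
begin

definition is_DO :: "nat \<Rightarrow> nat \<Rightarrow> ('a::field \<Rightarrow> 'a) \<Rightarrow> bool" where
  "is_DO p n f \<longleftrightarrow> (\<exists>a :: nat \<Rightarrow> nat \<Rightarrow> 'a. \<forall>x. f x =
     (if p = 2 then (\<Sum>i<n. \<Sum>j\<in>{..<n} - {i}. a i j * x ^ (2 ^ i + 2 ^ j))
      else (\<Sum>i<n. \<Sum>j<n. a i j * x ^ (p ^ i + p ^ j))))"

definition k_divisible :: "nat \<Rightarrow> ('a::field \<Rightarrow> 'a) \<Rightarrow> bool" where
  "k_divisible k f \<longleftrightarrow> (\<exists>f'. \<forall>x. f x = f' (x ^ k))"

definition almost_k_to_1 :: "nat \<Rightarrow> ('a \<Rightarrow> 'b) \<Rightarrow> bool" where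
  "almost_k_to_1 k f \<longleftrightarrow>
     (\<exists>!y. y \<in> range f \<and> card (f -` {y}) = 1) \<and>
     (\<forall>y \<in> range f. card (f -` {y}) \<noteq> 1 \<longrightarrow> card (f -` {y}) = k)"

definition diff_uniformity :: "('a::{finite,ring} \<Rightarrow> 'a) \<Rightarrow> nat" where
  "diff_uniformity f = Max {card {x. f (x + a) - f x = b} | a b. a \<noteq> 0}"

definition diff_uniform :: "nat \<Rightarrow> ('a::{finite,ring} \<Rightarrow> 'a) \<Rightarrow> bool" where
  "diff_uniform d f \<longleftrightarrow> d = diff_uniformity f"

definition zero_diff_balanced :: "nat \<Rightarrow> ('a::ring \<Rightarrow> 'a) \<Rightarrow> bool" where
  "zero_diff_balanced d f \<longleftrightarrow> (\<forall>a. a \<noteq> 0 \<longrightarrow> card {x. f (x + a) - f x = 0} = d)"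

definition diff_set :: "('a::ring \<Rightarrow> 'a) \<Rightarrow> 'a \<Rightarrow> 'a set" where
  "diff_set f a = {f (x + a) - f x | x. True}"

text \<open>Linear subspace over the prime field F_p = range of_nat.\<close>
definition prime_field_subspace :: "'a::field set \<Rightarrow> bool" where
  "prime_field_subspace S \<longleftrightarrow> 0 \<in> S \<and> (\<forall>x\<in>S. \<forall>y\<in>S. x + y \<in> S) \<and>
     (\<forall>c \<in> range (of_nat :: nat \<Rightarrow> 'a). \<forall>x\<in>S. c * x \<in> S)"

end

theory Submission
  imports Defs "HOL-Number_Theory.Residues"
begin

lemma roots_unity_card_le:
  assumes "k > 0"
  shows "card {x::'a::field. x ^ k = 1} \<le> k"
proof -
  let ?p = "Polynomial.monom (1::'a) k - 1"
  have c: "Polynomial.coeff ?p k = 1" using assms by (simp add: Polynomial.coeff_diff Polynomial.coeff_monom Polynomial.coeff_1)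
  hence nz: "?p \<noteq> 0" by (metis Polynomial.coeff_0 zero_neq_one)
  have dg: "Polynomial.degree ?p \<le> k"
    by (metis degree_diff_le degree_monom_le degree_1 le_zero_eq zero_le)
  have "{x::'a. x ^ k = 1} = {x. poly ?p x = 0}" by (auto simp: poly_monom)
  also have "card \<dots> \<le> Polynomial.degree ?p" by (rule card_poly_roots_bound[OF nz])
  finally show ?thesis using dg by linarith
qed

lemma fermat_ff:
  fixes x :: "'a::{finite,field}"
  assumes "x \<noteq> 0"
  shows "x ^ (card (UNIV :: 'a set) - 1) = 1"
proof -
  have "(\<Prod>y\<in>UNIV-{0}. x * y) = x ^ (card (UNIV :: 'a set) - 1) * \<Prod>(UNIV-{0})"
    by (simp add: prod.distrib mult_ac)
  moreover have "(\<Prod>y\<in>UNIV-{0}. x * y) = (\<Prod>y\<in>UNIV-{0}. y)"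
    by (rule prod.reindex_bij_witness[of _ "\<lambda>y. y / x" "\<lambda>y. x * y"]) (use assms in auto)
  moreover have "\<Prod>(UNIV-{0::'a}) \<noteq> 0" by (simp add: prod_zero_iff)
  ultimately show ?thesis by simp
qed

lemma roots_fiber:
  fixes x0 :: "'a::field"
  assumes "x0 \<noteq> 0"
  shows "{x. x ^ k = x0 ^ k} = (\<lambda>w. x0 * w) ` {w. w ^ k = 1}"
    and "card ((\<lambda>w. x0 * w) ` {w. w ^ k = 1}) = card {w::'a. w ^ k = 1}"
proof -
  show "{x. x ^ k = x0 ^ k} = (\<lambda>w. x0 * w) ` {w. w ^ k = 1}"
  proof (rule subset_antisym; rule subsetI)
    fix x assume "x \<in> {x. x ^ k = x0 ^ k}"
    hence "(x / x0) ^ k = 1" "x = x0 * (x / x0)" using assms by (auto simp: power_divide)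
    thus "x \<in> (\<lambda>w. x0 * w) ` {w. w ^ k = 1}" by blast
  qed (auto simp: power_mult_distrib)
  show "card ((\<lambda>w. x0 * w) ` {w. w ^ k = 1}) = card {w::'a. w ^ k = 1}"
    by (rule card_image) (use assms in \<open>auto simp: inj_on_def\<close>)
qed

lemma roots_unity_card:
  assumes "k > 0" and "k dvd card (UNIV :: 'a::{finite,field} set) - 1"
  shows "card {x::'a. x ^ k = 1} = k"
proof -
  define q where "q = card (UNIV :: 'a set)"
  define R where "R = {x::'a. x ^ k = 1}"
  obtain m where m: "q - 1 = k * m" using assms(2) q_def by blast
  have q2: "q \<ge> 2"
  proof -
    have "{0, 1::'a} \<subseteq> UNIV" by auto
    hence "card {0,1::'a} \<le> q" unfolding q_def by (intro card_mono) auto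
    thus ?thesis by simp
  qed
  hence mpos: "m > 0" using m by (cases m) auto
  define U where "U = (UNIV :: 'a set) - {0}"
  define g where "g = (\<lambda>x::'a. x ^ k)"
  have cU: "card U = q - 1" unfolding U_def q_def by (simp add: card_Diff_singleton)
  have U_eq: "U = (\<Union>y\<in>g ` U. {x\<in>U. g x = y})" by auto
  have "card U = (\<Sum>y\<in>g ` U. card {x\<in>U. g x = y})"
    by (subst U_eq, rule card_UN_disjoint) auto
  also have "\<dots> = (\<Sum>y\<in>g ` U. card R)"
  proof (rule sum.cong[OF refl])
    fix y assume "y \<in> g ` U"
    then obtain x0 where x0: "x0 \<in> U" "y = x0 ^ k" unfolding g_def by auto
    hence "x0 \<noteq> 0" unfolding U_def by auto
    have "{x\<in>U. g x = y} = {x. x ^ k = x0 ^ k}"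
      using \<open>x0 \<noteq> 0\<close> assms(1) x0 unfolding U_def g_def by (auto simp: power_0_left)
    thus "card {x\<in>U. g x = y} = card R"
      using roots_fiber[OF \<open>x0 \<noteq> 0\<close>, of k] unfolding R_def by simp
  qed
  also have "\<dots> = card (g ` U) * card R" by simp
  finally have e1: "q - 1 = card (g ` U) * card R" using cU by simp
  have "g ` U \<subseteq> {y. y ^ m = 1}"
  proof
    fix y assume "y \<in> g ` U"
    then obtain x where "x \<noteq> 0" "y = x ^ k" unfolding g_def U_def by auto
    hence "y ^ m = x ^ (k * m)" by (simp add: power_mult)
    hence "y ^ m = x ^ (q - 1)" by (simp only: m)
    thus "y \<in> {y. y ^ m = 1}" using fermat_ff[OF \<open>x \<noteq> 0\<close>] q_def by simp
  qed
  hence "card (g ` U) \<le> card {y::'a. y ^ m = 1}" by (intro card_mono) auto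
  also have "\<dots> \<le> m" by (rule roots_unity_card_le[OF mpos])
  finally have "k * m \<le> m * card R" using e1 m by (metis mult.commute mult_le_mono1)
  hence "k \<le> card R" using mpos by (simp add: mult.commute)
  moreover have "card R \<le> k" unfolding R_def by (rule roots_unity_card_le[OF assms(1)])
  ultimately show ?thesis unfolding R_def by simp
qed

definition quad_ok :: "('a::comm_ring_1 \<Rightarrow> 'a) \<Rightarrow> bool" where
  "quad_ok f \<longleftrightarrow> (\<forall>x y z. f (x + z + y) - f (x + z) - f y = (f (x + y) - f x - f y) + (f (z + y) - f z - f y))"

lemma quad_ok_sum:
  assumes "\<And>i. i \<in> I \<Longrightarrow> quad_ok (h i)"
  shows "quad_ok (\<lambda>x. \<Sum>i\<in>I. h i x)"
  unfolding quad_ok_def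
proof (intro allI)
  fix x y z
  show "(\<Sum>i\<in>I. h i (x + z + y)) - (\<Sum>i\<in>I. h i (x + z)) - (\<Sum>i\<in>I. h i y) =
    ((\<Sum>i\<in>I. h i (x + y)) - (\<Sum>i\<in>I. h i x) - (\<Sum>i\<in>I. h i y)) + ((\<Sum>i\<in>I. h i (z + y)) - (\<Sum>i\<in>I. h i z) - (\<Sum>i\<in>I. h i y))"
  proof -
    have t: "h i (x + z + y) - h i (x + z) - h i y = (h i (x + y) - h i x - h i y) + (h i (z + y) - h i z - h i y)"
      if "i \<in> I" for i using assms[OF that] unfolding quad_ok_def by blast
    have "(\<Sum>i\<in>I. h i (x + z + y)) - (\<Sum>i\<in>I. h i (x + z)) - (\<Sum>i\<in>I. h i y)
       = (\<Sum>i\<in>I. h i (x + z + y) - h i (x + z) - h i y)" by (simp add: sum_subtractf)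
    also have "\<dots> = (\<Sum>i\<in>I. (h i (x + y) - h i x - h i y) + (h i (z + y) - h i z - h i y))"
      by (rule sum.cong[OF refl]) (rule t)
    also have "\<dots> = ((\<Sum>i\<in>I. h i (x + y)) - (\<Sum>i\<in>I. h i x) - (\<Sum>i\<in>I. h i y)) + ((\<Sum>i\<in>I. h i (z + y)) - (\<Sum>i\<in>I. h i z) - (\<Sum>i\<in>I. h i y))"
      by (simp add: sum.distrib sum_subtractf sum_distrib_left sum_negf)
    finally show ?thesis .
  qed
qed

lemma quad_ok_term:
  assumes "\<And>x y. A (x + y) = A x + A y" "\<And>x y. B (x + y) = B x + B y"
  shows "quad_ok (\<lambda>x. (c::'a::comm_ring_1) * (A x * B x))"
  unfolding quad_ok_def using assms by (simp add: algebra_simps)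


lemma add_fiber:
  fixes L :: "'a::ab_group_add \<Rightarrow> 'b::ab_group_add"
  assumes add: "\<And>x z. L (x + z) = L x + L z" and x0: "L x0 = c"
  shows "{x. L x = c} = (\<lambda>y. y + x0) ` {x. L x = 0}"
    and "card ((\<lambda>y. y + x0) ` {x. L x = 0}) = card {x. L x = 0}"
proof -
  have sub: "L (x - z) = L x - L z" for x z using add[of "x - z" z] by simp
  show "{x. L x = c} = (\<lambda>y. y + x0) ` {x. L x = 0}"
  proof (rule subset_antisym; rule subsetI)
    fix x assume "x \<in> {x. L x = c}"
    hence "L (x - x0) = 0" "x = (x - x0) + x0" using sub x0 by auto
    thus "x \<in> (\<lambda>y. y + x0) ` {x. L x = 0}" by blast
  qed (auto simp: add x0)
  show "card ((\<lambda>y. y + x0) ` {x. L x = 0}) = card {x. L x = 0}"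
    by (rule card_image) (auto simp: inj_on_def)
qed

lemma char_eq_p:
  assumes "prime p" and "card (UNIV :: 'a::{finite,field} set) = p ^ n"
  shows "CHAR('a) = p"
proof -
  have pc: "prime CHAR('a)"
    by (rule prime_CHAR_semidom, rule finite_imp_CHAR_pos) simp
  have "CHAR('a) dvd p ^ n" using CHAR_dvd_CARD[where 'a='a] assms(2) by simp
  hence "CHAR('a) dvd p" using pc prime_dvd_power by blast
  thus ?thesis using pc assms(1) primes_dvd_imp_eq by blast
qed

lemma DO_quad:
  fixes f :: "'a::{finite,field} \<Rightarrow> 'a"
  assumes "prime p" and "card (UNIV :: 'a set) = p ^ n" and "is_DO p n f"
  shows "quad_ok f" and "f 0 = 0"
proof -
  have pc: "prime CHAR('a)" using char_eq_p[OF assms(1,2)] assms(1) by simp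
  have frob: "\<And>i x y. (x + y :: 'a) ^ (p ^ i) = x ^ (p ^ i) + y ^ (p ^ i)"
    using freshmans_dream'[OF pc] char_eq_p[OF assms(1,2)] by simp
  obtain c where c: "\<forall>x. f x =
     (if p = 2 then (\<Sum>i<n. \<Sum>j\<in>{..<n} - {i}. c i j * x ^ (2 ^ i + 2 ^ j))
      else (\<Sum>i<n. \<Sum>j<n. c i j * x ^ (p ^ i + p ^ j)))"
    using assms(3) unfolding is_DO_def by blast
  define J where "J = (\<lambda>i. if p = 2 then {..<n} - {i} else {..<n})"
  have fe: "f = (\<lambda>x. \<Sum>i<n. \<Sum>j\<in>J i. c i j * (x ^ (p ^ i) * x ^ (p ^ j)))"
    by (rule ext) (simp add: c J_def power_add)
  show "quad_ok f" unfolding fe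
    by (intro quad_ok_sum quad_ok_term frob)
  have "p > 0" using assms(1) prime_gt_0_nat by blast
  hence z0: "\<And>i. (0::'a) ^ (p ^ i) = 0" by (simp add: zero_power)
  show "f 0 = 0" unfolding fe by (simp only: z0 mult_zero_right mult_zero_left sum.neutral_const)
qed

theorem lemma3p1:
  fixes f :: "'a::{finite,field} \<Rightarrow> 'a" and p n d :: nat
  assumes "prime p" and "card (UNIV :: 'a set) = p ^ n"
    and "(d + 1) dvd (card (UNIV :: 'a set) - 1)"
    and "is_DO p n f" and "k_divisible (d + 1) f" and "almost_k_to_1 (d + 1) f"
  shows "zero_diff_balanced d f
     \<and> (diff_uniform d f \<and> (\<forall>a. a \<noteq> 0 \<longrightarrow> prime_field_subspace (diff_set f a)))
     \<and> (\<exists>i. d = p ^ i)"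
proof -
  define k where "k = d + 1"
  define R where "R = {w::'a. w ^ k = 1}"
  have one_R: "1 \<in> R" unfolding R_def by simp
  have cR: "card R = k" unfolding R_def k_def using roots_unity_card[OF _ assms(3)] by simp
  have finR: "finite R" by simp
  have quad: "quad_ok f" and f0: "f 0 = 0" using DO_quad[OF assms(1,2,4)] by auto
  obtain f' where f': "\<And>x. f x = f' (x ^ k)" using assms(5) unfolding k_divisible_def k_def by blast
  have frot: "f (w * x) = f x" if "w \<in> R" for w x
    using that f' unfolding R_def by (simp add: power_mult_distrib)
  have ak: "(\<exists>!y. y \<in> range f \<and> card (f -` {y}) = 1)"
     "\<And>y. y \<in> range f \<Longrightarrow> card (f -` {y}) \<noteq> 1 \<Longrightarrow> card (f -` {y}) = k"
    using assms(6) unfolding almost_k_to_1_def k_def by auto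
  have two: "card {0, 1::'a} \<le> card (UNIV :: 'a set)" by (intro card_mono) auto
  have d1: "d \<ge> 1"
  proof (rule ccontr)
    assume "\<not> d \<ge> 1"
    hence k1: "k = 1" unfolding k_def by simp
    have all1: "card (f -` {y}) = 1" if "y \<in> range f" for y using ak(2)[OF that] k1 by auto
    obtain y where "y \<in> range f" by auto
    have "f 0 \<noteq> f 1"
    proof
      assume "f 0 = f 1"
      hence "{0, 1} \<subseteq> f -` {f 0}" by auto
      hence "card {0, 1::'a} \<le> card (f -` {f 0})" by (intro card_mono) auto
      thus False using all1[of "f 0"] by simp
    qed
    thus False using ak(1) all1[of "f 0"] all1[of "f 1"] by (metis rangeI)
  qed
  hence k2: "k \<ge> 2" unfolding k_def by simp
  obtain w1 where w1: "w1 \<in> R" "w1 \<noteq> 1"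
  proof -
    have "card R > card {1::'a}" using cR k2 by simp
    hence "\<not> R \<subseteq> {1}" using card_mono[OF _ , of "{1::'a}" R] by auto
    thus ?thesis using that by blast
  qed
  obtain y1 where y1: "y1 \<in> range f" "card (f -` {y1}) = 1" using ak(1) by blast
  obtain z where z: "f -` {y1} = {z}" using y1(2) card_1_singletonE by blast
  have "f z = y1" using z by auto
  hence "w1 * z \<in> f -` {y1}" using frot[OF w1(1)] by simp
  hence "w1 * z = z" using z by simp
  hence "(w1 - 1) * z = 0" by (simp add: algebra_simps)
  hence "z = 0" using w1(2) by simp
  hence fib0: "f -` {f 0} = {0}" using z by auto
  have f_zero: "f x = f 0 \<longleftrightarrow> x = 0" for x using fib0 by auto
  have fib: "f -` {f x} = (\<lambda>w. x * w) ` R" if "x \<noteq> 0" for x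
  proof -
    have "card (f -` {f x}) \<noteq> 1"
    proof
      assume "card (f -` {f x}) = 1"
      hence "f x = y1" using ak(1) y1 by blast
      hence "f x = f 0" using z \<open>z = 0\<close> by (metis insertI1 vimage_singleton_eq)
      thus False using f_zero that by simp
    qed
    hence cf: "card (f -` {f x}) = k" using ak(2) by simp
    have sub: "(\<lambda>w. x * w) ` R \<subseteq> f -` {f x}" using frot by (auto simp: mult.commute)
    have "card ((\<lambda>w. x * w) ` R) = k" using roots_fiber(2)[OF that, of k] cR unfolding R_def by simp
    thus ?thesis using card_subset_eq[OF _ sub] cf by simp
  qed
  have same: "\<exists>w\<in>R. y = x * w" if "f y = f x" "x \<noteq> 0" for x y
    using fib[OF that(2)] that(1) by (metis image_iff vimage_singleton_eq)
  have zd: "card {x. f (x + a) - f x = 0} = d" if "a \<noteq> 0" for a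
  proof -
    have eq: "{x. f (x + a) - f x = 0} = (\<lambda>w. a / (w - 1)) ` (R - {1})"
    proof (rule subset_antisym; rule subsetI)
      fix x assume "x \<in> {x. f (x + a) - f x = 0}"
      hence fx: "f (x + a) = f x" by simp
      have "x \<noteq> 0" using fx f_zero that by (metis add_0)
      then obtain w where w: "w \<in> R" "x + a = x * w" using same[OF fx] by blast
      have "w \<noteq> 1" using w that by auto
      hence "x = a / (w - 1)" using w by (simp add: field_simps)
      thus "x \<in> (\<lambda>w. a / (w - 1)) ` (R - {1})" using w \<open>w \<noteq> 1\<close> by blast
    next
      fix x assume "x \<in> (\<lambda>w. a / (w - 1)) ` (R - {1})"
      then obtain w where w: "w \<in> R" "w \<noteq> 1" "x = a / (w - 1)" by blast
      hence "x + a = w * x" by (simp add: field_simps)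
      thus "x \<in> {x. f (x + a) - f x = 0}" using frot[OF w(1)] by simp
    qed
    have inj: "inj_on (\<lambda>w. a / (w - 1)) (R - {1})"
      by (rule inj_onI) (use that in \<open>auto simp: field_simps\<close>)
    have "card (R - {1}) = d" using cR \<open>1 \<in> R\<close> unfolding k_def by simp
    thus ?thesis using eq card_image[OF inj] by simp
  qed
  have main: "card {x. f (x + a) - f x = b} \<in> {0, d} \<and> prime_field_subspace (diff_set f a)
      \<and> d dvd card (UNIV :: 'a set)" if a0: "a \<noteq> 0" for a b
  proof -
    define L where "L = (\<lambda>x. f (x + a) - f x - f a)"
    have Ladd: "L (x + z) = L x + L z" for x z
      using quad unfolding quad_ok_def L_def by blast
    have Lsub: "L (x - z) = L x - L z" for x z using Ladd[of "x - z" z] by simp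
    have Seq: "{x. f (x + a) - f x = c} = {x. L x = c - f a}" for c
      unfolding L_def by (auto simp: algebra_simps)
    define K where "K = {x. L x = 0}"
    have cS: "card {x. f (x + a) - f x = c} = card K" if "x0 \<in> {x. f (x + a) - f x = c}" for c x0
    proof -
      have "L x0 = c - f a" using that Seq by blast
      thus ?thesis unfolding Seq K_def using add_fiber[of L x0 "c - f a", OF Ladd] by simp
    qed
    have "{x. f (x + a) - f x = 0} \<noteq> {}" using zd[OF a0] d1 by (metis card.empty not_one_le_zero)
    then obtain x0 where x0: "f (x0 + a) - f x0 = 0" by blast
    have cK: "card K = d" using cS[of x0 0] x0 zd[OF a0] by simp
    have c1: "card {x. f (x + a) - f x = b} \<in> {0, d}"
    proof (cases "{x. f (x + a) - f x = b} = {}")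
      case False
      then obtain x1 where "x1 \<in> {x. f (x + a) - f x = b}" by blast
      thus ?thesis using cS cK by auto
    qed simp
    have Lx0: "L x0 = - f a" using x0 unfolding L_def by (simp add: algebra_simps)
    have D: "diff_set f a = {f a + L x | x. True}" unfolding diff_set_def L_def by simp
    have D0: "0 \<in> diff_set f a" proof -
      have "0 = f a + L x0" using Lx0 by simp
      thus ?thesis unfolding D by blast
    qed
    have Dadd: "u + v \<in> diff_set f a" if uv: "u \<in> diff_set f a" "v \<in> diff_set f a" for u v
    proof -
      obtain x y where "u = f a + L x" "v = f a + L y" using uv unfolding D by blast
      moreover have "L (x + y - x0) = L x + L y + f a" using Lsub[of "x + y" x0] Ladd[of x y] Lx0 by simp
      ultimately have "u + v = f a + L (x + y - x0)" by (simp add: algebra_simps)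
      thus ?thesis unfolding D by blast
    qed
    have Dmul: "of_nat m * u \<in> diff_set f a" if "u \<in> diff_set f a" for m u
      by (induction m) (simp_all add: D0 Dadd that algebra_simps)
    have sp: "prime_field_subspace (diff_set f a)"
      unfolding prime_field_subspace_def using D0 Dadd Dmul by blast
    have "card (UNIV :: 'a set) = card (\<Union>y\<in>range L. {x. L x = y})" by (simp add: UNION_singleton_eq_range) (blast intro: arg_cong[where f=card])
    also have "\<dots> = (\<Sum>y\<in>range L. card {x. L x = y})" by (rule card_UN_disjoint) auto
    also have "\<dots> = (\<Sum>y\<in>range L. d)"
    proof (rule sum.cong[OF refl])
      fix y assume "y \<in> range L"
      then obtain x1 where "L x1 = y" by blast
      thus "card {x. L x = y} = d" using add_fiber[of L x1 y, OF Ladd] cK unfolding K_def by simp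
    qed
    also have "\<dots> = card (range L) * d" by simp
    finally have "d dvd card (UNIV :: 'a set)" by simp
    thus ?thesis using c1 sp by blast
  qed
  have A: "zero_diff_balanced d f" unfolding zero_diff_balanced_def using zd by blast
  have B: "diff_uniform d f"
    unfolding diff_uniform_def diff_uniformity_def
  proof (rule Max_eqI[symmetric])
    show "finite {card {x. f (x + a) - f x = b} |a b. a \<noteq> 0}"
    proof (rule finite_subset[of _ "{0, d}"])
      show "{card {x. f (x + a) - f x = b} |a b. a \<noteq> 0} \<subseteq> {0, d}"
      proof
        fix y assume "y \<in> {card {x. f (x + a) - f x = b} |a b. a \<noteq> 0}"
        then obtain a b where "a \<noteq> 0" "y = card {x. f (x + a) - f x = b}" by blast
        thus "y \<in> {0, d}" using main[of a b] by simp
      qed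
    qed simp
    show "\<And>y. y \<in> {card {x. f (x + a) - f x = b} |a b. a \<noteq> 0} \<Longrightarrow> y \<le> d"
    proof -
      fix y assume "y \<in> {card {x. f (x + a) - f x = b} |a b. a \<noteq> 0}"
      then obtain a b where "a \<noteq> 0" "y = card {x. f (x + a) - f x = b}" by blast
      thus "y \<le> d" using main[of a b] by auto
    qed
    show "d \<in> {card {x. f (x + a) - f x = b} |a b. a \<noteq> 0}"
    proof -
      have "card {x. f (x + 1) - f x = 0} = d" by (rule zd) simp
      hence "d = card {x. f (x + 1) - f x = 0} \<and> (1::'a) \<noteq> 0" by simp
      thus ?thesis by blast
    qed
  qed
  have "d dvd p ^ n" using main[of 1 0] assms(2) by simp
  hence C: "\<exists>i. d = p ^ i" using divides_primepow_nat[OF assms(1)] by blast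
  have S: "\<forall>a. a \<noteq> 0 \<longrightarrow> prime_field_subspace (diff_set f a)" using main by blast
  show ?thesis using A B C S by blast
qed
end
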